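(* Let $X,Y$ be Banach spaces, let $F:X\rightrightarrows Y$ be a closed convex set-valued mapping, let $A\subset X$ be a closed convex set, let $\bar y\in Y$, put $S:=F^{-1}(\bar y)\cap A$, and let $\bar x\in S$. Then $$\frac{1}{\eta_A(F,\bar x,\bar y)}=\inf\{\tau>0:\exists\delta>0\text{ such that } N(S,x)\cap B_{X^*}\subset\tau\big(D^*F(x,\bar y)(B_{Y^*})+N(A,x)\cap B_{X^*}\big)\text{ for every }x\in S\cap B(\bar x,\delta)\}.$$
   Context: $B_X,B_Y,B_{X^*},B_{Y^*}$ are the closed unit balls of $X,Y$ and their duals; $B(x,\delta)$ is the open ball. $F$ closed convex means ${\rm gph}(F)=\{(x,y):y\in F(x)\}$ is closed and convex in $X\times Y$. For a closed convex set $C$ and $a\in C$: the contingent cone $T(C,a)$ is the set of $v$ for which there exist $v_n\to v$, $t_n\to0^+$ with $a+t_nv_n\in C$ for all $n$; the normal cone is $N(C,a):=\{x^*\in X^*:\langle x^*,x-a\rangle\le0\ \forall x\in C\}$. For $(x,y)\in{\rm gph}(F)$: $DF^{-1}(y,x)(v):=\{u\in X:(u,v)\in T({\rm gph}(F),(x,y))\}$, $DF^{-1}(y,x)(W)=\bigcup_{v\in W}DF^{-1}(y,x)(v)$ for $W\subset Y$; the coderivative is $D^*F(x,y)(y^* ):=\{x^*\in X^*:(x^*,-y^* )\in N({\rm gph}(F),(x,y))\}$ and $D^*F(x,y)(B_{Y^*})=\bigcup_{y^*\in B_{Y^*}}D^*F(x,y)(y^* )$. $\eta_A(F,\bar x,\bar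 y):=\sup\{\eta>0:\exists\delta>0$ such that for every $x\in S\cap B(\bar x,\delta)$: $DF^{-1}(\bar y,x)(\eta_1B_Y)\cap(T(A,x)+\eta_2B_X)\subset T(S,x)+B_X$ for all $\eta_1,\eta_2\ge0$ with $\eta_1+\eta_2<\eta\}$, with $\sup\emptyset=0$, $\inf\emptyset=+\infty$, $1/0=+\infty$. *)

theory Defs
  imports "HOL-Analysis.Analysis"
begin

definition gph :: "('a \<Rightarrow> 'b set) \<Rightarrow> ('a \<times> 'b) set" where
  "gph F = {(x, y). y \<in> F x}"

definition contingent_cone :: "'a::real_normed_vector set \<Rightarrow> 'a \<Rightarrow> 'a set" where
  "contingent_cone C a = {v. \<exists>vs ts. vs \<longlonglongrightarrow> v \<and> ts \<longlonglongrightarrow> 0 \<and> (\<forall>n. ts n > (0::real))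
       \<and> (\<forall>n. a + ts n *\<^sub>R vs n \<in> C)}"

definition normal_cone :: "'a::real_normed_vector set \<Rightarrow> 'a \<Rightarrow> ('a \<Rightarrow>\<^sub>L real) set" where
  "normal_cone C a = {xs. \<forall>x\<in>C. blinfun_apply xs (x - a) \<le> 0}"

definition graph_deriv_inv ::
  "('a::real_normed_vector \<Rightarrow> 'b::real_normed_vector set) \<Rightarrow> 'b \<Rightarrow> 'a \<Rightarrow> 'b \<Rightarrow> 'a set" where
  "graph_deriv_inv F y x v = {u. (u, v) \<in> contingent_cone (gph F) (x, y)}"

definition graph_deriv_inv_set ::
  "('a::real_normed_vector \<Rightarrow> 'b::real_normed_vector set) \<Rightarrow> 'b \<Rightarrow> 'a \<Rightarrow> 'b set \<Rightarrow> 'a set" where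
  "graph_deriv_inv_set F y x W = (\<Union>v\<in>W. graph_deriv_inv F y x v)"

text \<open>Coderivative D*F(x,y)(y*): (x*,-y*) \<in> N(gph F,(x,y)), where the dual of X \<times> Y
  is identified with X* \<times> Y* via the pairing ((x*,y*),(u,v)) = x*(u) + y*(v).\<close>
definition coderiv ::
  "('a::real_normed_vector \<Rightarrow> 'b::real_normed_vector set) \<Rightarrow> 'a \<Rightarrow> 'b \<Rightarrow> ('b \<Rightarrow>\<^sub>L real) \<Rightarrow> ('a \<Rightarrow>\<^sub>L real) set" where
  "coderiv F x y ys = {xs. \<forall>(u, v)\<in>gph F.
      blinfun_apply xs (u - x) + blinfun_apply (- ys) (v - y) \<le> 0}"

definition coderiv_set ::
  "('a::real_normed_vector \<Rightarrow> 'b::real_normed_vector set) \<Rightarrow> 'a \<Rightarrow> 'b \<Rightarrow> ('b \<Rightarrow>\<^sub>L real) set \<Rightarrow> ('a \<Rightarrow>\<^sub>L real) set" where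
  "coderiv_set F x y W = (\<Union>ys\<in>W. coderiv F x y ys)"

definition msum :: "'a::real_vector set \<Rightarrow> 'a set \<Rightarrow> 'a set" where
  "msum P Q = {p + q | p q. p \<in> P \<and> q \<in> Q}"

definition sscale :: "real \<Rightarrow> 'a::real_vector set \<Rightarrow> 'a set" where
  "sscale t P = (\<lambda>z. t *\<^sub>R z) ` P"

definition eta_set ::
  "('a::real_normed_vector \<Rightarrow> 'b::real_normed_vector set) \<Rightarrow> 'a set \<Rightarrow> 'a \<Rightarrow> 'b \<Rightarrow> real set" where
  "eta_set F A x0 y0 = {\<eta>. \<eta> > 0 \<and> (\<exists>\<delta>>0. \<forall>x \<in> ({x. y0 \<in> F x} \<inter> A) \<inter> ball x0 \<delta>.
      \<forall>\<eta>1 \<eta>2. \<eta>1 \<ge> 0 \<and> \<eta>2 \<ge> 0 \<and> \<eta>1 + \<eta>2 < \<eta> \<longrightarrow>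
        graph_deriv_inv_set F y0 x (sscale \<eta>1 (cball 0 1))
          \<inter> msum (contingent_cone A x) (sscale \<eta>2 (cball 0 1))
        \<subseteq> msum (contingent_cone ({x. y0 \<in> F x} \<inter> A) x) (cball 0 1))}"

text \<open>\<eta>_A(F,x0,y0) as an extended real, with sup of the empty set equal to 0.\<close>
definition eta_A ::
  "('a::real_normed_vector \<Rightarrow> 'b::real_normed_vector set) \<Rightarrow> 'a set \<Rightarrow> 'a \<Rightarrow> 'b \<Rightarrow> ereal" where
  "eta_A F A x0 y0 = (if eta_set F A x0 y0 = {} then 0 else Sup (ereal ` eta_set F A x0 y0))"

definition ereal_recip :: "ereal \<Rightarrow> ereal" where
  "ereal_recip t = (if t = 0 then \<infinity> else if t = \<infinity> then 0 else 1 / t)"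

end

theory Submission
  imports Defs
begin

definition lsub :: "'v::real_vector set \<Rightarrow> bool" where
  "lsub G \<longleftrightarrow> 0 \<in> G \<and> (\<forall>x\<in>G. \<forall>y\<in>G. x + y \<in> G) \<and> (\<forall>c. \<forall>x\<in>G. c *\<^sub>R x \<in> G)"

lemma HB_sandwich:
  fixes p :: "'v::real_vector \<Rightarrow> real" and H :: "('v \<times> real) set"
  assumes sub: "\<And>x y. p (x + y) \<le> p x + p y"
    and hom: "\<And>c x. c > 0 \<Longrightarrow> p (c *\<^sub>R x) = c * p x"
    and H0: "(0,0) \<in> H" and Hadd: "\<And>a b. a \<in> H \<Longrightarrow> b \<in> H \<Longrightarrow> a + b \<in> H"
    and Hsc: "\<And>c a. c > 0 \<Longrightarrow> a \<in> H \<Longrightarrow> c *\<^sub>R a \<in> H"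
    and Hle: "\<And>d s. (d,s) \<in> H \<Longrightarrow> s \<le> p d"
  shows "\<exists>l. linear l \<and> (\<forall>x. l x \<le> p x) \<and> (\<forall>(d,s)\<in>H. s \<le> l d)"
proof -
  have p0: "p 0 = 0" using hom[of 2 0] by simp
  define Phi where "Phi G \<longleftrightarrow> lsub G \<and> (\<forall>w r d s. (w,r)\<in>G \<longrightarrow> (d,s)\<in>H \<longrightarrow> r + s \<le> p (w + d))" for G
  define GG where "GG = {G. Phi G}"
  have base: "Phi {0}" unfolding Phi_def lsub_def using Hle by (auto simp: zero_prod_def)
  have "\<exists>U\<in>GG. \<forall>X\<in>C. X \<subseteq> U" if C: "C \<in> chains GG" for C
  proof (cases "C = {}")
    case True then show ?thesis using base GG_def by auto
  next
    case False
    have ch: "\<And>X Y. X \<in> C \<Longrightarrow> Y \<in> C \<Longrightarrow> X \<subseteq> Y \<or> Y \<subseteq> X" and sub: "C \<subseteq> GG"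
      using C unfolding chains_def chain_subset_def by auto
    have PhiC: "\<And>X. X \<in> C \<Longrightarrow> Phi X" using sub GG_def by auto
    have lsC: "lsub (\<Union>C)"
      unfolding lsub_def
    proof (intro conjI ballI allI)
      show "0 \<in> \<Union>C" using False PhiC unfolding Phi_def lsub_def by auto
    next
      fix x y assume "x \<in> \<Union>C" "y \<in> \<Union>C"
      then obtain X Y where XY: "X \<in> C" "Y \<in> C" "x \<in> X" "y \<in> Y" by auto
      have lX: "lsub X" "lsub Y" using PhiC XY(1,2) unfolding Phi_def by auto
      show "x + y \<in> \<Union>C"
      proof (cases "X \<subseteq> Y")
        case True
        have "x + y \<in> Y" using lX(2) XY(3,4) True unfolding lsub_def by auto
        then show ?thesis using XY(2) by auto
      next
        case False then have "Y \<subseteq> X" using ch[OF XY(1,2)] by auto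
        have "x + y \<in> X" using lX(1) XY(3,4) \<open>Y \<subseteq> X\<close> unfolding lsub_def by auto
        then show ?thesis using XY(1) by auto
      qed
    next
      fix c x assume "x \<in> \<Union>C"
      then obtain X where X: "X \<in> C" "x \<in> X" by auto
      have "lsub X" using PhiC X(1) unfolding Phi_def by auto
      then have "c *\<^sub>R x \<in> X" using X unfolding lsub_def by auto
      then show "c *\<^sub>R x \<in> \<Union>C" using X by auto
    qed
    have aux: "r + s \<le> p (w + d)" if wr: "(w,r) \<in> \<Union>C" "(d,s) \<in> H" for w r d s
    proof -
      obtain X where X: "X \<in> C" "(w,r) \<in> X" using wr by auto
      have "Phi X" using PhiC X(1) by auto
      then show ?thesis using X(2) wr(2) unfolding Phi_def by auto
    qed
    have "\<forall>w r d s. (w,r)\<in>\<Union>C \<longrightarrow> (d,s)\<in>H \<longrightarrow> r + s \<le> p (w + d)"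
      by (intro allI impI, rule aux)
    with lsC have "Phi (\<Union>C)" unfolding Phi_def by (rule conjI)
    then show ?thesis using GG_def by auto
  qed
  then have "\<forall>C\<in>chains GG. \<exists>U\<in>GG. \<forall>X\<in>C. X \<subseteq> U" by blast
  from Zorn_Lemma2[OF this] obtain M where M: "M \<in> GG" and Mmax: "\<And>X. X \<in> GG \<Longrightarrow> M \<subseteq> X \<Longrightarrow> X = M"
    by blast
  have PM: "Phi M" using M GG_def by auto
  have Msub: "lsub M" and Mle: "\<And>w r d s. (w,r) \<in> M \<Longrightarrow> (d,s) \<in> H \<Longrightarrow> r + s \<le> p (w + d)"
    using PM unfolding Phi_def by auto
  have Madd: "\<And>x y. x \<in> M \<Longrightarrow> y \<in> M \<Longrightarrow> x + y \<in> M"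
    and Msc: "\<And>c x. x \<in> M \<Longrightarrow> c *\<^sub>R x \<in> M" and M0: "0 \<in> M"
    using Msub unfolding lsub_def by auto
  have total: "\<exists>r. (x, r) \<in> M" for x
  proof (rule ccontr)
    assume na: "\<nexists>r. (x, r) \<in> M"
    define L where "L = {r + s - p (w - x + d) | w r d s. (w,r) \<in> M \<and> (d,s) \<in> H}"
    have key: "l \<le> p (w2 + x + d2) - r2 - s2" if lw: "l \<in> L" "(w2,r2) \<in> M" "(d2,s2) \<in> H" for l w2 r2 d2 s2
    proof -
      obtain w1 r1 d1 s1 where l: "l = r1 + s1 - p (w1 - x + d1)" "(w1,r1) \<in> M" "(d1,s1) \<in> H"
        using lw(1) L_def by auto
      have "(w1 + w2, r1 + r2) \<in> M" using Madd[OF l(2) lw(2)] by simp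
      moreover have "(d1 + d2, s1 + s2) \<in> H" using Hadd[OF l(3) lw(3)] by simp
      ultimately have "r1 + r2 + (s1 + s2) \<le> p (w1 + w2 + (d1 + d2))" by (rule Mle)
      also have "w1 + w2 + (d1 + d2) = (w1 - x + d1) + (w2 + x + d2)" by (simp add: algebra_simps)
      also have "p \<dots> \<le> p (w1 - x + d1) + p (w2 + x + d2)" by (rule sub)
      finally show ?thesis using l(1) by simp
    qed
    have M00: "(0,0) \<in> M" using M0 by (simp add: zero_prod_def)
    have "0 + 0 - p (0 - x + 0) \<in> L" unfolding L_def using M00 H0 by blast
    hence Lne: "L \<noteq> {}" by auto
    have "\<forall>l\<in>L. l \<le> p (0 + x + 0) - 0 - 0" using key[OF _ M00 H0] by blast
    hence Lbdd: "bdd_above L" by (auto simp: bdd_above_def)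
    define c where "c = Sup L"
    have cup: "l \<le> c" if "l \<in> L" for l using cSup_upper[OF that Lbdd] c_def by simp
    have clow: "c \<le> p (w2 + x + d2) - r2 - s2" if "(w2,r2) \<in> M" "(d2,s2) \<in> H" for w2 r2 d2 s2
      unfolding c_def by (rule cSup_least[OF Lne], rule key[OF _ that])
    define M' where "M' = {m + t *\<^sub>R (x, c) | m t. m \<in> M}"
    have memM': "m + t *\<^sub>R (x, c) \<in> M'" if "m \<in> M" for m t
      unfolding M'_def mem_Collect_eq by (rule exI[of _ m], rule exI[of _ t]) (simp add: that)
    have M'E: "\<exists>m t. z = m + t *\<^sub>R (x, c) \<and> m \<in> M" if "z \<in> M'" for z
      using that by (simp only: M'_def mem_Collect_eq)
    have "Phi M'"
      unfolding Phi_def lsub_def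
    proof (intro conjI ballI allI impI)
      show "0 \<in> M'" using memM'[OF M0, of 0] by (simp add: zero_prod_def)
    next
      fix a b assume "a \<in> M'" "b \<in> M'"
      then obtain m1 t1 m2 t2 where ab: "a = m1 + t1 *\<^sub>R (x,c)" "b = m2 + t2 *\<^sub>R (x,c)" "m1 \<in> M" "m2 \<in> M"
        using M'E by metis
      have "a + b = (m1 + m2) + (t1 + t2) *\<^sub>R (x,c)" using ab by (simp add: scaleR_add_left algebra_simps)
      moreover have "m1 + m2 \<in> M" using Madd ab by simp
      ultimately show "a + b \<in> M'" using memM' by metis
    next
      fix k a assume "a \<in> M'"
      then obtain m t where am: "a = m + t *\<^sub>R (x,c)" "m \<in> M" using M'E by metis
      have "k *\<^sub>R a = k *\<^sub>R m + (k * t) *\<^sub>R (x,c)" using am by (simp add: scaleR_add_right)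
      moreover have "k *\<^sub>R m \<in> M" using Msc am by simp
      ultimately show "k *\<^sub>R a \<in> M'" using memM' by metis
    next
      fix w0 r0 d s assume wr: "(w0,r0) \<in> M'" and ds: "(d,s) \<in> H"
      have ds': "(d,s) = (d,s)" by simp
      obtain m t where mt: "(w0,r0) = m + t *\<^sub>R (x, c)" "m \<in> M" using M'E[OF wr] by blast
      obtain w r where mwr: "m = (w,r)" by (cases m)
      have wr': "(w0,r0) = (w + t *\<^sub>R x, r + t * c)" "(w,r) \<in> M" using mt mwr by auto
      have "r + t * c + s \<le> p (w + t *\<^sub>R x + d)"
      proof (cases "t = 0")
        case True then show ?thesis using Mle[OF wr'(2) ds] by simp
      next
        case False
        show ?thesis
        proof (cases "t > 0")
          case True
          have a: "(inverse t *\<^sub>R w, inverse t * r) \<in> M" using Msc[OF wr'(2), of "inverse t"] by simp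
          have b: "(inverse t *\<^sub>R d, inverse t * s) \<in> H" using Hsc[OF _ ds, of "inverse t"] True by simp
          define P where "P = p (inverse t *\<^sub>R w + x + inverse t *\<^sub>R d)"
          have "c \<le> P - inverse t * r - inverse t * s"
            unfolding P_def by (rule clow[OF a b])
          hence "t * c \<le> t * (P - inverse t * r - inverse t * s)"
            using True by (intro mult_left_mono) auto
          also have "\<dots> = t * P - r - s" using True by (simp add: right_diff_distrib mult.assoc[symmetric])
          also have "t * P = p (t *\<^sub>R (inverse t *\<^sub>R w + x + inverse t *\<^sub>R d))"
            unfolding P_def using hom[OF True] by simp
          also have "t *\<^sub>R (inverse t *\<^sub>R w + x + inverse t *\<^sub>R d) = w + t *\<^sub>R x + d"
            using True by (simp add: scaleR_add_right)
          finally show ?thesis by simp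
        next
          case False2: False
          define u where "u = - t"
          have u: "u > 0" using False False2 u_def by simp
          have a: "(inverse u *\<^sub>R w, inverse u * r) \<in> M" using Msc[OF wr'(2), of "inverse u"] by simp
          have b: "(inverse u *\<^sub>R d, inverse u * s) \<in> H" using Hsc[OF _ ds, of "inverse u"] u by simp
          define P where "P = p (inverse u *\<^sub>R w - x + inverse u *\<^sub>R d)"
          have "inverse u * r + inverse u * s - P \<in> L"
            unfolding L_def P_def mem_Collect_eq using a b by blast
          hence "inverse u * r + inverse u * s - P \<le> c" by (rule cup)
          hence "u * (inverse u * r + inverse u * s - P) \<le> u * c"
            using u by (intro mult_left_mono) auto
          moreover have "u * (inverse u * r + inverse u * s - P) = r + s - u * P"
            using u by (simp add: right_diff_distrib distrib_left mult.assoc[symmetric])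
          moreover have "u * P = p (u *\<^sub>R (inverse u *\<^sub>R w - x + inverse u *\<^sub>R d))"
            unfolding P_def using hom[OF u] by simp
          moreover have "u *\<^sub>R (inverse u *\<^sub>R w - x + inverse u *\<^sub>R d) = w + t *\<^sub>R x + d"
            using u u_def by (simp add: scaleR_add_right scaleR_diff_right)
          moreover have "u * c = - (t * c)" using u_def by simp
          ultimately have "r + s - p (w + t *\<^sub>R x + d) \<le> - (t * c)" by simp
          then show ?thesis by linarith
        qed
      qed
      then show "r0 + s \<le> p (w0 + d)"
        using wr' by simp
    qed
    hence "M' \<in> GG" using GG_def by simp
    moreover have "M \<subseteq> M'" using memM'[of _ 0] by auto
    ultimately have "M' = M" by (rule Mmax)
    moreover have "(x, c) \<in> M'" using memM'[OF M0, of 1] by simp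
    ultimately show False using na by auto
  qed
  have uniq: "r1 = r2" if "(x, r1) \<in> M" "(x, r2) \<in> M" for x r1 r2
  proof -
    have "(x, r1) + (-1) *\<^sub>R (x, r2) \<in> M" using Madd[OF that(1) Msc[OF that(2)]] .
    hence a: "(0, r1 - r2) \<in> M" by simp
    have "(-1) *\<^sub>R (0, r1 - r2) \<in> M" using Msc[OF a] .
    hence b: "(0, r2 - r1) \<in> M" by simp
    show ?thesis using Mle[OF a H0] Mle[OF b H0] p0 by simp
  qed
  define l where "l x = (SOME r. (x, r) \<in> M)" for x
  have lM: "(x, l x) \<in> M" for x unfolding l_def using total[of x] by (rule someI_ex)
  have "linear l"
  proof (rule linearI)
    fix a b
    have "(a, l a) + (b, l b) \<in> M" using Madd[OF lM lM] .
    thus "l (a + b) = l a + l b" using uniq[OF lM[of "a+b"]] by simp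
  next
    fix k a
    have "k *\<^sub>R (a, l a) \<in> M" using Msc[OF lM] .
    thus "l (k *\<^sub>R a) = k *\<^sub>R l a" using uniq[OF lM[of "k *\<^sub>R a"]] by simp
  qed
  moreover have lp: "l x \<le> p x" for x using Mle[OF lM[of x] H0] by simp
  moreover have lH: "s \<le> l d" if "(d,s) \<in> H" for d s
  proof -
    have "(-1) *\<^sub>R (d, l d) \<in> M" using Msc[OF lM] .
    hence "(- d, - l d) \<in> M" by simp
    from Mle[OF this that] p0 show ?thesis by simp
  qed
  ultimately show ?thesis using lp lH by (intro exI[of _ l]) auto
qed

lemma convex_shrink:
  fixes C :: "'a::real_vector set"
  assumes "convex C" "a \<in> C" "a + t *\<^sub>R z \<in> C" "0 < r" "r \<le> t"
  shows "a + r *\<^sub>R z \<in> C"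
proof -
  have t: "t > 0" using assms by simp
  have "(1 - r / t) *\<^sub>R a + (r / t) *\<^sub>R (a + t *\<^sub>R z) \<in> C"
    by (rule convexD[OF assms(1,2,3)]) (use t assms(4,5) in auto)
  also have "(1 - r / t) *\<^sub>R a + (r / t) *\<^sub>R (a + t *\<^sub>R z) = a + r *\<^sub>R z"
    using t by (simp add: algebra_simps)
  finally show ?thesis .
qed

lemma tc_zero: "a \<in> C \<Longrightarrow> 0 \<in> contingent_cone C a"
  unfolding contingent_cone_def
  by (rule CollectI, rule exI[of _ "\<lambda>n. 0"], rule exI[of _ "\<lambda>n. inverse (real (Suc n))"])
     (use LIMSEQ_inverse_real_of_nat in simp)

lemma tc_seg:
  assumes "convex C" "a \<in> C" "c \<in> C"
  shows "c - a \<in> contingent_cone C a"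
  unfolding contingent_cone_def
proof (rule CollectI, rule exI[of _ "\<lambda>n. c - a"], rule exI[of _ "\<lambda>n. inverse (real (Suc n))"], intro conjI allI)
  fix n
  have h1: "a + 1 *\<^sub>R (c - a) \<in> C" using assms by simp
  have h2: "inverse (real (Suc n)) \<le> 1" by (simp add: inverse_le_1_iff del: of_nat_Suc)
  have h3: "0 < inverse (real (Suc n))" by (simp del: of_nat_Suc)
  show "a + inverse (real (Suc n)) *\<^sub>R (c - a) \<in> C"
    by (rule convex_shrink[OF assms(1,2) h1 h3 h2])
qed (use LIMSEQ_inverse_real_of_nat in auto)

lemma tc_scale:
  assumes "v \<in> contingent_cone C a" "k > 0"
  shows "k *\<^sub>R v \<in> contingent_cone C a"
proof -
  obtain vs ts where h: "vs \<longlonglongrightarrow> v" "ts \<longlonglongrightarrow> 0" "\<forall>n. ts n > 0" "\<forall>n. a + ts n *\<^sub>R vs n \<in> C"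
    using assms(1) unfolding contingent_cone_def by blast
  have "(\<lambda>n. k *\<^sub>R vs n) \<longlonglongrightarrow> k *\<^sub>R v" using h(1) by (intro tendsto_intros)
  moreover have "(\<lambda>n. ts n / k) \<longlonglongrightarrow> 0" using h(2) tendsto_divide_zero by blast
  moreover have "\<forall>n. ts n / k > 0" using h(3) assms(2) by simp
  moreover have "\<forall>n. a + (ts n / k) *\<^sub>R (k *\<^sub>R vs n) \<in> C" using h(4) assms(2) by simp
  ultimately show ?thesis unfolding contingent_cone_def by blast
qed

lemma tc_add:
  assumes "convex C" "a \<in> C" "v \<in> contingent_cone C a" "w \<in> contingent_cone C a"
  shows "v + w \<in> contingent_cone C a"
proof -
  obtain vs ts where h: "vs \<longlonglongrightarrow> v" "ts \<longlonglongrightarrow> 0" "\<forall>n. ts n > 0" "\<forall>n. a + ts n *\<^sub>R vs n \<in> C"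
    using assms(3) unfolding contingent_cone_def by blast
  obtain ws ss where g: "ws \<longlonglongrightarrow> w" "ss \<longlonglongrightarrow> 0" "\<forall>n. ss n > 0" "\<forall>n. a + ss n *\<^sub>R ws n \<in> C"
    using assms(4) unfolding contingent_cone_def by blast
  define r where "r n = min (ts n) (ss n)" for n
  have r0: "r n > 0" for n using h(3) g(3) r_def by simp
  have rv: "a + r n *\<^sub>R vs n \<in> C" for n
    using convex_shrink[OF assms(1,2) h(4)[rule_format, of n] r0[of n]] r_def by simp
  have rw: "a + r n *\<^sub>R ws n \<in> C" for n
    using convex_shrink[OF assms(1,2) g(4)[rule_format, of n] r0[of n]] r_def by simp
  have "(\<lambda>n. vs n + ws n) \<longlonglongrightarrow> v + w" using h(1) g(1) by (intro tendsto_intros)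
  moreover have "(\<lambda>n. r n / 2) \<longlonglongrightarrow> 0"
  proof -
    have "r \<longlonglongrightarrow> min 0 0" unfolding r_def using h(2) g(2) by (intro tendsto_min)
    then show ?thesis using tendsto_divide_zero by fastforce
  qed
  moreover have "\<forall>n. r n / 2 > 0" using r0 by simp
  moreover have "\<forall>n. a + (r n / 2) *\<^sub>R (vs n + ws n) \<in> C"
  proof
    fix n
    have "(1/2) *\<^sub>R (a + r n *\<^sub>R vs n) + (1/2) *\<^sub>R (a + r n *\<^sub>R ws n) \<in> C"
      using rv[of n] rw[of n] assms(1) unfolding convex_def by auto
    also have "(1/2) *\<^sub>R (a + r n *\<^sub>R vs n) + (1/2) *\<^sub>R (a + r n *\<^sub>R ws n) = ((1/2) *\<^sub>R a + (1/2) *\<^sub>R a) + (r n / 2) *\<^sub>R (vs n + ws n)"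
      by (simp add: algebra_simps)
    also have "(1/2) *\<^sub>R a + (1/2) *\<^sub>R a = a" by (metis scaleR_add_left field_sum_of_halves scaleR_one)
    finally show "a + (r n / 2) *\<^sub>R (vs n + ws n) \<in> C" .
  qed
  ultimately show ?thesis unfolding contingent_cone_def by blast
qed

lemma tc_normal:
  assumes "bounded_linear f" "\<And>c. c \<in> C \<Longrightarrow> f (c - a) \<le> (0::real)" "v \<in> contingent_cone C a"
  shows "f v \<le> 0"
proof -
  obtain vs ts where h: "vs \<longlonglongrightarrow> v" "ts \<longlonglongrightarrow> 0" "\<forall>n. ts n > 0" "\<forall>n. a + ts n *\<^sub>R vs n \<in> C"
    using assms(3) unfolding contingent_cone_def by blast
  have "f (vs n) \<le> 0" for n
  proof -
    have "f (a + ts n *\<^sub>R vs n - a) \<le> 0" using assms(2) h(4) by blast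
    hence "ts n * f (vs n) \<le> 0" using linear.scaleR[OF bounded_linear.linear[OF assms(1)]] by simp
    thus ?thesis using h(3)[rule_format, of n] by (simp add: mult_le_0_iff)
  qed
  moreover have "(\<lambda>n. f (vs n)) \<longlonglongrightarrow> f v" using bounded_linear.tendsto[OF assms(1) h(1)] .
  ultimately show ?thesis using LIMSEQ_le_const2 by blast
qed

lemma convex_fiber:
  assumes "convex (gph F)"
  shows "convex {x. y \<in> F x}"
proof (rule convexI)
  fix x1 x2 u v :: real
  fix a b assume ab: "a \<in> {x. y \<in> F x}" "b \<in> {x. y \<in> F x}" and uv: "0 \<le> u" "0 \<le> v" "u + v = 1"
  have "(a, y) \<in> gph F" "(b, y) \<in> gph F" using ab unfolding gph_def by auto
  from convexD[OF assms this uv] have "(u *\<^sub>R a + v *\<^sub>R b, u *\<^sub>R y + v *\<^sub>R y) \<in> gph F" by simp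
  moreover have "u *\<^sub>R y + v *\<^sub>R y = y" using uv by (metis scaleR_add_left scaleR_one)
  ultimately show "u *\<^sub>R a + v *\<^sub>R b \<in> {x. y \<in> F x}" unfolding gph_def by simp
qed

lemma sscale_ballI:
  fixes w :: "'a::real_normed_vector"
  assumes "norm w \<le> r"
  shows "w \<in> sscale r (cball 0 1)"
proof (cases "r = 0")
  case True
  then have "w = 0" using assms by simp
  then show ?thesis unfolding sscale_def using True by (auto intro!: image_eqI[of _ _ 0])
next
  case False
  then have r: "r > 0" using assms norm_ge_zero[of w] by linarith
  have "w = r *\<^sub>R (inverse r *\<^sub>R w)" using r by simp
  moreover have "inverse r *\<^sub>R w \<in> cball 0 1" using r assms by (simp add: field_simps)
  ultimately show ?thesis unfolding sscale_def by blast
qed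

lemma sscale_ballD:
  fixes w :: "'a::real_normed_vector"
  assumes "w \<in> sscale r (cball 0 1)" "r \<ge> 0"
  shows "norm w \<le> r"
proof -
  obtain z where z: "w = r *\<^sub>R z" "z \<in> cball 0 1" using assms(1) unfolding sscale_def by blast
  then have z2: "norm z \<le> 1" by simp
  have "norm w = r * norm z" using z(1) assms(2) by simp
  also have "\<dots> \<le> r * 1" using z2 assms(2) by (intro mult_left_mono) auto
  finally show ?thesis by simp
qed

lemma linear_bounded_by_norm:
  fixes l :: "'a::real_normed_vector \<Rightarrow> real"
  assumes lin: "linear l" and le: "\<And>x. l x \<le> K * norm x"
  shows "bounded_linear l" "\<And>x. norm (l x) \<le> K * norm x"
proof -
  have neg: "l (- x) = - l x" for x using linear.scaleR[OF lin, of "-1" x] by simp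
  show nb: "norm (l x) \<le> K * norm x" for x
    using le[of x] le[of "-x"] neg[of x] by auto
  show "bounded_linear l"
    by (rule bounded_linear.intro[OF lin], rule bounded_linear_axioms.intro, rule exI[of _ K])
       (use nb in \<open>simp add: mult.commute\<close>)
qed

lemma coderiv_tangent:
  assumes "xs \<in> coderiv F x y ys" "(u, v) \<in> contingent_cone (gph F) (x, y)"
  shows "blinfun_apply xs u \<le> blinfun_apply ys v"
proof -
  have bl: "bounded_linear (\<lambda>pq. blinfun_apply xs (fst pq) - blinfun_apply ys (snd pq))"
    by (intro bounded_linear_sub bounded_linear_compose[OF blinfun.bounded_linear_right]
        bounded_linear_fst bounded_linear_snd)
  have "(\<lambda>pq. blinfun_apply xs (fst pq) - blinfun_apply ys (snd pq)) (u, v) \<le> 0"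
  proof (rule tc_normal[OF bl _ assms(2)])
    fix c assume "c \<in> gph F"
    moreover obtain c1 c2 where c: "c = (c1, c2)" by (cases c)
    ultimately have "blinfun_apply xs (c1 - x) + blinfun_apply (- ys) (c2 - y) \<le> 0"
      using assms(1) unfolding coderiv_def by auto
    then show "(\<lambda>pq. blinfun_apply xs (fst pq) - blinfun_apply ys (snd pq)) (c - (x, y)) \<le> 0"
      using c by (simp add: uminus_blinfun.rep_eq)
  qed
  then show ?thesis by simp
qed

lemma normal_tangent:
  assumes "xs \<in> normal_cone C a" "v \<in> contingent_cone C a"
  shows "blinfun_apply xs v \<le> 0"
  by (rule tc_normal[OF blinfun.bounded_linear_right _ assms(2)]) (use assms(1) in \<open>auto simp: normal_cone_def\<close>)

lemma blinfun_le_norm: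
  fixes f :: "'a::real_normed_vector \<Rightarrow>\<^sub>L real"
  assumes "norm f \<le> 1" "norm v \<le> r"
  shows "blinfun_apply f v \<le> r"
proof -
  have "blinfun_apply f v \<le> norm (blinfun_apply f v)" by simp
  also have "\<dots> \<le> norm f * norm v" by (rule norm_blinfun)
  also have "\<dots> \<le> 1 * r" using assms by (intro mult_mono) auto
  finally show ?thesis by simp
qed

lemma dir1_point:
  fixes F :: "'a::real_normed_vector \<Rightarrow> 'b::real_normed_vector set"
  assumes cg: "convex (gph F)" and cA: "convex A" and xS: "x \<in> {x. ybar \<in> F x} \<inter> A"
    and tau: "\<tau> > 0"
    and inc: "normal_cone ({x. ybar \<in> F x} \<inter> A) x \<inter> cball 0 1
       \<subseteq> sscale \<tau> (msum (coderiv_set F x ybar (cball 0 1)) (normal_cone A x \<inter> cball 0 1))"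
    and e: "\<eta>1 \<ge> 0" "\<eta>2 \<ge> 0" "\<tau> * (\<eta>1 + \<eta>2) < 1"
    and u1: "u \<in> graph_deriv_inv_set F ybar x (sscale \<eta>1 (cball 0 1))"
    and u2: "u \<in> msum (contingent_cone A x) (sscale \<eta>2 (cball 0 1))"
  shows "u \<in> msum (contingent_cone ({x. ybar \<in> F x} \<inter> A) x) (cball 0 1)"
proof (rule ccontr)
  define S where "S = {x. ybar \<in> F x} \<inter> A"
  assume nu: "u \<notin> msum (contingent_cone ({x. ybar \<in> F x} \<inter> A) x) (cball 0 1)"
  have cS: "convex S" unfolding S_def using convex_fiber[OF cg] cA by (rule convex_Int)
  have xS': "x \<in> S" using xS S_def by simp
  define TS where "TS = contingent_cone S x"
  have nu': "u \<notin> msum TS (cball 0 1)" using nu S_def TS_def by simp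
  have far: "1 < norm (u - c)" if "c \<in> TS" for c
  proof (rule ccontr)
    assume "\<not> 1 < norm (u - c)"
    then have "u - c \<in> cball 0 1" by simp
    then have "c + (u - c) \<in> msum TS (cball 0 1)" unfolding msum_def using that by blast
    then show False using nu' by simp
  qed
  define H where "H = {(t *\<^sub>R u - c, t) | t c. t \<ge> 0 \<and> c \<in> TS}"
  have T0: "0 \<in> TS" unfolding TS_def by (rule tc_zero[OF xS'])
  have Tadd: "a + b \<in> TS" if "a \<in> TS" "b \<in> TS" for a b
    using tc_add[OF cS xS'] that unfolding TS_def by blast
  have Tsc: "k *\<^sub>R a \<in> TS" if "a \<in> TS" "k > 0" for a k
    using tc_scale that unfolding TS_def by blast
  have "\<exists>l. linear l \<and> (\<forall>x. l x \<le> norm x) \<and> (\<forall>(d,s)\<in>H. s \<le> l d)"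
  proof (rule HB_sandwich)
    show "norm (x + y) \<le> norm x + norm y" for x y :: 'a by (rule norm_triangle_ineq)
    show "norm (c *\<^sub>R x) = c * norm x" if "c > 0" for c and x :: 'a using that by simp
    show "(0, 0) \<in> H" unfolding H_def using T0 by (auto intro!: exI[of _ 0])
  next
    fix a b assume "a \<in> H" "b \<in> H"
    then obtain t1 c1 t2 c2 where ab: "a = (t1 *\<^sub>R u - c1, t1)" "t1 \<ge> 0" "c1 \<in> TS"
      "b = (t2 *\<^sub>R u - c2, t2)" "t2 \<ge> 0" "c2 \<in> TS" unfolding H_def by blast
    have "a + b = ((t1 + t2) *\<^sub>R u - (c1 + c2), t1 + t2)" using ab by (simp add: algebra_simps)
    moreover have "t1 + t2 \<ge> 0" "c1 + c2 \<in> TS" using ab Tadd by auto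
    ultimately show "a + b \<in> H" unfolding H_def by blast
  next
    fix k a assume k: "(k::real) > 0" and "a \<in> H"
    then obtain t c where a: "a = (t *\<^sub>R u - c, t)" "t \<ge> 0" "c \<in> TS" unfolding H_def by blast
    have "k *\<^sub>R a = ((k * t) *\<^sub>R u - k *\<^sub>R c, k * t)" using a by (simp add: algebra_simps)
    moreover have "k * t \<ge> 0" "k *\<^sub>R c \<in> TS" using a k Tsc by auto
    ultimately show "k *\<^sub>R a \<in> H" unfolding H_def by blast
  next
    fix d s assume "(d, s) \<in> H"
    then obtain t c where a: "d = t *\<^sub>R u - c" "s = t" "t \<ge> 0" "c \<in> TS" unfolding H_def by blast
    show "s \<le> norm d"
    proof (cases "t = 0")
      case True then show ?thesis using a by simp
    next
      case False
      then have t: "t > 0" using a by simp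
      have "1 < norm (u - inverse t *\<^sub>R c)" using far Tsc[OF a(4), of "inverse t"] t by simp
      then have "t * 1 < t * norm (u - inverse t *\<^sub>R c)" using t by simp
      also have "t * norm (u - inverse t *\<^sub>R c) = norm (t *\<^sub>R (u - inverse t *\<^sub>R c))" using t by simp
      also have "t *\<^sub>R (u - inverse t *\<^sub>R c) = d" using a t by (simp add: scaleR_diff_right)
      finally show ?thesis using a by simp
    qed
  qed
  then obtain l where lin: "linear l" and lle: "\<And>x. l x \<le> norm x" and lH: "\<And>d s. (d,s) \<in> H \<Longrightarrow> s \<le> l d"
    by blast
  have lle1: "l x \<le> 1 * norm x" for x using lle[of x] by simp
  have bl: "bounded_linear l" and nb: "\<And>x. norm (l x) \<le> 1 * norm x"
    using linear_bounded_by_norm[OF lin lle1] by auto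
  define xs where "xs = Blinfun l"
  have ap: "blinfun_apply xs = l" unfolding xs_def using bl by (rule bounded_linear_Blinfun_apply)
  have nxs: "norm xs \<le> 1" by (rule norm_blinfun_bound) (use nb ap in auto)
  have xsN: "xs \<in> normal_cone S x" unfolding normal_cone_def
  proof (intro CollectI ballI)
    fix x' assume "x' \<in> S"
    then have "x' - x \<in> TS" unfolding TS_def by (rule tc_seg[OF cS xS'])
    then have "(0 *\<^sub>R u - (x' - x), 0) \<in> H" unfolding H_def by blast
    then have "0 \<le> l (0 *\<^sub>R u - (x' - x))" using lH by blast
    moreover have "l (0 *\<^sub>R u - (x' - x)) = - l (x' - x)" using linear.scaleR[OF lin, of "-1" "x' - x"] by simp
    ultimately show "blinfun_apply xs (x' - x) \<le> 0" using ap by simp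
  qed
  have lu: "1 \<le> l u"
  proof -
    have "(1 *\<^sub>R u - 0, 1) \<in> H" unfolding H_def mem_Collect_eq
      by (rule exI[of _ 1], rule exI[of _ 0]) (simp add: T0)
    then show ?thesis using lH by fastforce
  qed
  have "xs \<in> normal_cone ({x. ybar \<in> F x} \<inter> A) x \<inter> cball 0 1" using xsN nxs S_def by simp
  then have "xs \<in> sscale \<tau> (msum (coderiv_set F x ybar (cball 0 1)) (normal_cone A x \<inter> cball 0 1))"
    using inc by blast
  then obtain m where m: "xs = \<tau> *\<^sub>R m" "m \<in> msum (coderiv_set F x ybar (cball 0 1)) (normal_cone A x \<inter> cball 0 1)"
    unfolding sscale_def by blast
  then obtain a b where ab: "m = a + b" "a \<in> coderiv_set F x ybar (cball 0 1)" "b \<in> normal_cone A x \<inter> cball 0 1"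
    unfolding msum_def by blast
  then obtain ys where a: "a \<in> coderiv F x ybar ys" and ys0: "ys \<in> cball 0 1"
    unfolding coderiv_set_def by blast
  have ys: "norm ys \<le> 1" using ys0 by simp
  have b: "b \<in> normal_cone A x" "norm b \<le> 1" using ab(3) by auto
  have xsd: "xs = \<tau> *\<^sub>R (a + b)" using m ab by simp
  obtain v where v: "v \<in> sscale \<eta>1 (cball 0 1)" "(u, v) \<in> contingent_cone (gph F) (x, ybar)"
    using u1 unfolding graph_deriv_inv_set_def graph_deriv_inv_def by blast
  obtain w z where wz: "u = w + z" "w \<in> contingent_cone A x" "z \<in> sscale \<eta>2 (cball 0 1)"
    using u2 unfolding msum_def by blast
  have "blinfun_apply a u \<le> blinfun_apply ys v" by (rule coderiv_tangent[OF a v(2)])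
  also have "\<dots> \<le> \<eta>1" by (rule blinfun_le_norm[OF ys sscale_ballD[OF v(1) e(1)]])
  finally have au: "blinfun_apply a u \<le> \<eta>1" .
  have bw: "blinfun_apply b w \<le> 0" by (rule normal_tangent[OF b(1) wz(2)])
  have bz: "blinfun_apply b z \<le> \<eta>2" by (rule blinfun_le_norm[OF b(2) sscale_ballD[OF wz(3) e(2)]])
  have "l u = blinfun_apply xs u" using ap by simp
  also have "\<dots> = \<tau> * (blinfun_apply a u + blinfun_apply b u)"
    unfolding xsd by (simp add: scaleR_blinfun.rep_eq plus_blinfun.rep_eq)
  also have "blinfun_apply b u = blinfun_apply b w + blinfun_apply b z"
    unfolding wz(1) by (rule blinfun.add_right)
  finally have "l u = \<tau> * (blinfun_apply a u + blinfun_apply b w + blinfun_apply b z)" by simp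
  also have "\<dots> \<le> \<tau> * (\<eta>1 + \<eta>2)" using au bw bz tau by (intro mult_left_mono) auto
  finally show False using lu e(3) by simp
qed

lemma dir2_point:
  fixes F :: "'a::real_normed_vector \<Rightarrow> 'b::real_normed_vector set"
  assumes cg: "convex (gph F)" and cA: "convex A" and xS: "x \<in> {x. ybar \<in> F x} \<inter> A"
    and tau: "\<tau> > 0" and eta: "1 / \<tau> < \<eta>"
    and prim: "\<And>\<eta>1 \<eta>2. \<eta>1 \<ge> 0 \<Longrightarrow> \<eta>2 \<ge> 0 \<Longrightarrow> \<eta>1 + \<eta>2 < \<eta> \<Longrightarrow>
        graph_deriv_inv_set F ybar x (sscale \<eta>1 (cball 0 1))
          \<inter> msum (contingent_cone A x) (sscale \<eta>2 (cball 0 1))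
        \<subseteq> msum (contingent_cone ({x. ybar \<in> F x} \<inter> A) x) (cball 0 1)"
    and xsN: "xs \<in> normal_cone ({x. ybar \<in> F x} \<inter> A) x \<inter> cball 0 1"
  shows "xs \<in> sscale \<tau> (msum (coderiv_set F x ybar (cball 0 1)) (normal_cone A x \<inter> cball 0 1))"
proof -
  define S where "S = {x. ybar \<in> F x} \<inter> A"
  have cS: "convex S" unfolding S_def using convex_fiber[OF cg] cA by (rule convex_Int)
  have xS': "x \<in> S" using xS S_def by simp
  have xgph: "(x, ybar) \<in> gph F" using xS unfolding gph_def by simp
  define TG where "TG = contingent_cone (gph F) (x, ybar)"
  define TA where "TA = contingent_cone A x"
  have xA: "x \<in> A" using xS by simp
  have nxs: "norm xs \<le> 1" and xsS: "xs \<in> normal_cone S x" using xsN S_def by auto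
  let ?f = "blinfun_apply xs"
  have fTS: "?f t \<le> 0" if "t \<in> contingent_cone S x" for t by (rule normal_tangent[OF xsS that])
  have TG0: "0 \<in> TG" unfolding TG_def by (rule tc_zero[OF xgph])
  have TA0: "0 \<in> TA" unfolding TA_def by (rule tc_zero[OF xA])
  have TGadd: "a + b \<in> TG" if "a \<in> TG" "b \<in> TG" for a b using tc_add[OF cg xgph] that unfolding TG_def by blast
  have TAadd: "a + b \<in> TA" if "a \<in> TA" "b \<in> TA" for a b using tc_add[OF cA xA] that unfolding TA_def by blast
  have TGsc: "k *\<^sub>R a \<in> TG" if "a \<in> TG" "k > 0" for a k using tc_scale that unfolding TG_def by blast
  have TAsc: "k *\<^sub>R a \<in> TA" if "a \<in> TA" "k > 0" for a k using tc_scale that unfolding TA_def by blast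
  define H :: "(('b \<times> 'a) \<times> real) set" where "H = {((v, z), ?f u) | u v z. (u, v) \<in> TG \<and> u - z \<in> TA}"
  define p :: "'b \<times> 'a \<Rightarrow> real" where "p vz = \<tau> * (norm (fst vz) + norm (snd vz))" for vz
  have bound: "?f u \<le> \<tau> * (norm v + norm z)" if uv: "(u, v) \<in> TG" and uz: "u - z \<in> TA" for u v z
  proof -
    define N where "N = norm v + norm z"
    have key: "s * ?f u \<le> 1" if s: "s > 0" "s * N < \<eta>" for s
    proof -
      have e1: "s * norm v \<ge> 0" "s * norm z \<ge> 0" using s by auto
      have e3: "s * norm v + s * norm z < \<eta>" using s N_def by (simp add: distrib_left)
      have "s *\<^sub>R u \<in> graph_deriv_inv_set F ybar x (sscale (s * norm v) (cball 0 1))"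
      proof -
        have "(s *\<^sub>R u, s *\<^sub>R v) \<in> TG" using TGsc[OF uv s(1)] by simp
        moreover have "s *\<^sub>R v \<in> sscale (s * norm v) (cball 0 1)" using s by (intro sscale_ballI) simp
        ultimately show ?thesis unfolding graph_deriv_inv_set_def graph_deriv_inv_def TG_def by blast
      qed
      moreover have "s *\<^sub>R u \<in> msum (contingent_cone A x) (sscale (s * norm z) (cball 0 1))"
      proof -
        have "s *\<^sub>R (u - z) \<in> TA" using TAsc[OF uz s(1)] .
        moreover have "s *\<^sub>R z \<in> sscale (s * norm z) (cball 0 1)" using s by (intro sscale_ballI) simp
        moreover have "s *\<^sub>R u = s *\<^sub>R (u - z) + s *\<^sub>R z" by (simp add: scaleR_diff_right)
        ultimately show ?thesis unfolding msum_def TA_def by blast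
      qed
      ultimately have "s *\<^sub>R u \<in> msum (contingent_cone S x) (cball 0 1)"
        using prim[OF e1 e3] S_def by blast
      then obtain t b where tb: "s *\<^sub>R u = t + b" "t \<in> contingent_cone S x" "b \<in> cball 0 1"
        unfolding msum_def by blast
      have "s * ?f u = ?f (s *\<^sub>R u)" by (simp add: blinfun.scaleR_right)
      also have "\<dots> = ?f t + ?f b" unfolding tb(1) by (rule blinfun.add_right)
      also have "\<dots> \<le> 0 + 1" using fTS[OF tb(2)] blinfun_le_norm[OF nxs, of b 1] tb(3) by (intro add_mono) auto
      finally show ?thesis by simp
    qed
    show ?thesis
    proof (cases "N = 0")
      case True
      show ?thesis
      proof (rule ccontr)
        assume "\<not> ?thesis"
        then have pos: "?f u > 0" using True N_def by simp
        have etap: "\<eta> > 0" using eta tau by (meson divide_pos_pos less_trans zero_less_one)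
        have "(2 / ?f u) * ?f u \<le> 1" by (rule key) (use pos True etap in auto)
        then show False using pos by simp
      qed
    next
      case False
      have "N \<ge> 0" unfolding N_def by simp
      then have Np: "N > 0" using False by linarith
      have "(1 / (\<tau> * N)) * ?f u \<le> 1" using key[of "1 / (\<tau> * N)"] Np tau eta by (simp add: field_simps)
      have tn: "\<tau> * N > 0" using Np tau by simp
      then have "?f u / (\<tau> * N) \<le> 1" using \<open>(1 / (\<tau> * N)) * ?f u \<le> 1\<close> by simp
      then have "?f u \<le> \<tau> * N" using tn by (simp add: pos_divide_le_eq)
      then show ?thesis using N_def by simp
    qed
  qed
  have "\<exists>l. linear l \<and> (\<forall>x. l x \<le> p x) \<and> (\<forall>(d,s)\<in>H. s \<le> l d)"
  proof (rule HB_sandwich)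
    show "p (a + b) \<le> p a + p b" for a b
    proof -
      have "norm (fst a + fst b) + norm (snd a + snd b) \<le> (norm (fst a) + norm (snd a)) + (norm (fst b) + norm (snd b))"
        using norm_triangle_ineq[of "fst a" "fst b"] norm_triangle_ineq[of "snd a" "snd b"] by simp
      then show ?thesis unfolding p_def using tau by (simp add: distrib_left[symmetric] mult_left_mono)
    qed
    show "p (c *\<^sub>R a) = c * p a" if "c > 0" for c a using that unfolding p_def by (simp add: algebra_simps)
    show "(0, 0) \<in> H" unfolding H_def mem_Collect_eq
      by (rule exI[of _ 0], rule exI[of _ 0], rule exI[of _ 0]) (simp add: TG0[unfolded zero_prod_def] TA0 zero_prod_def)
  next
    fix a b assume "a \<in> H" "b \<in> H"
    then obtain u1 v1 z1 u2 v2 z2 where ab: "a = ((v1, z1), ?f u1)" "(u1, v1) \<in> TG" "u1 - z1 \<in> TA"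
      "b = ((v2, z2), ?f u2)" "(u2, v2) \<in> TG" "u2 - z2 \<in> TA" unfolding H_def by blast
    have "a + b = ((v1 + v2, z1 + z2), ?f (u1 + u2))" using ab by (simp add: blinfun.add_right)
    moreover have "(u1 + u2, v1 + v2) \<in> TG" using TGadd[OF ab(2) ab(5)] by simp
    moreover have "(u1 + u2) - (z1 + z2) \<in> TA" using TAadd[OF ab(3) ab(6)] by (simp add: algebra_simps)
    ultimately show "a + b \<in> H" unfolding H_def by blast
  next
    fix k a assume k: "(k::real) > 0" and "a \<in> H"
    then obtain u v z where a: "a = ((v, z), ?f u)" "(u, v) \<in> TG" "u - z \<in> TA" unfolding H_def by blast
    have "k *\<^sub>R a = ((k *\<^sub>R v, k *\<^sub>R z), ?f (k *\<^sub>R u))" using a by (simp add: blinfun.scaleR_right)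
    moreover have "(k *\<^sub>R u, k *\<^sub>R v) \<in> TG" using TGsc[OF a(2) k] by simp
    moreover have "k *\<^sub>R u - k *\<^sub>R z \<in> TA" using TAsc[OF a(3) k] by (simp add: scaleR_diff_right)
    ultimately show "k *\<^sub>R a \<in> H" unfolding H_def by blast
  next
    fix d s assume "(d, s) \<in> H"
    then obtain u v z where a: "d = (v, z)" "s = ?f u" "(u, v) \<in> TG" "u - z \<in> TA" unfolding H_def by blast
    show "s \<le> p d" using bound[OF a(3,4)] a(1,2) unfolding p_def by simp
  qed
  then obtain l where lin: "linear l" and lle: "\<And>w. l w \<le> p w" and lH: "\<And>d s. (d,s) \<in> H \<Longrightarrow> s \<le> l d"
    by blast
  define y0 where "y0 v = l (v, 0)" for v
  define b0 where "b0 z = l (0, z)" for z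
  have ladd: "l (a + b) = l a + l b" for a b using lin unfolding linear_iff by blast
  have lsc: "l (c *\<^sub>R a) = c * l a" for c a using linear.scaleR[OF lin] by simp
  have linY: "linear y0" unfolding y0_def
    by (rule linearI) (use ladd lsc in \<open>simp_all add: ladd[symmetric] lsc[symmetric]\<close>)
  have linB: "linear b0" unfolding b0_def
    by (rule linearI) (use ladd lsc in \<open>simp_all add: ladd[symmetric] lsc[symmetric]\<close>)
  have y0le: "y0 v \<le> \<tau> * norm v" for v using lle[of "(v, 0)"] unfolding y0_def p_def by simp
  have b0le: "b0 z \<le> \<tau> * norm z" for z using lle[of "(0, z)"] unfolding b0_def p_def by simp
  have blY: "bounded_linear y0" and nY: "\<And>v. norm (y0 v) \<le> \<tau> * norm v"
    using linear_bounded_by_norm[OF linY y0le] by auto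
  have blB: "bounded_linear b0" and nB: "\<And>z. norm (b0 z) \<le> \<tau> * norm z"
    using linear_bounded_by_norm[OF linB b0le] by auto
  define ys where "ys = Blinfun y0"
  define bs where "bs = Blinfun b0"
  have apY: "blinfun_apply ys = y0" unfolding ys_def using blY by (rule bounded_linear_Blinfun_apply)
  have apB: "blinfun_apply bs = b0" unfolding bs_def using blB by (rule bounded_linear_Blinfun_apply)
  have lsplit: "l (v, u) = y0 v + b0 u" for v u
    using ladd[of "(v, 0)" "(0, u)"] unfolding y0_def b0_def by simp
  have fi: "?f u \<le> y0 v + b0 u" if "(u, v) \<in> TG" for u v
  proof -
    have "((v, u), ?f u) \<in> H" unfolding H_def using that TA0 by auto
    then show ?thesis using lH lsplit by fastforce
  qed
  have fii: "b0 w \<le> 0" if "w \<in> TA" for w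
  proof -
    have "((0, - w), ?f 0) \<in> H" unfolding H_def mem_Collect_eq
      by (rule exI[of _ 0], rule exI[of _ 0], rule exI[of _ "- w"]) (simp add: TG0[unfolded zero_prod_def] that)
    then have "0 \<le> l (0, - w)" using lH by fastforce
    moreover have "l (0, - w) = - b0 w" unfolding b0_def using lsc[of "-1" "(0, w)"] by simp
    ultimately show ?thesis by simp
  qed
  define a where "a = xs - bs"
  define k where "k = inverse \<tau>"
  have k: "k > 0" "\<tau> * k = 1" using tau k_def by auto
  have aC: "k *\<^sub>R a \<in> coderiv F x ybar (k *\<^sub>R ys)"
    unfolding coderiv_def
  proof (intro CollectI ballI)
    fix c assume c: "c \<in> gph F"
    obtain u' v' where c': "c = (u', v')" by (cases c)
    have "(u' - x, v' - ybar) \<in> TG" using tc_seg[OF cg xgph c] c' unfolding TG_def by simp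
    then have "?f (u' - x) \<le> y0 (v' - ybar) + b0 (u' - x)" by (rule fi)
    then have "blinfun_apply a (u' - x) \<le> blinfun_apply ys (v' - ybar)"
      unfolding a_def using apY apB by (simp add: minus_blinfun.rep_eq)
    then have "k * blinfun_apply a (u' - x) \<le> k * blinfun_apply ys (v' - ybar)"
      using k by (intro mult_left_mono) auto
    then show "case c of (u, v) \<Rightarrow> blinfun_apply (k *\<^sub>R a) (u - x) + blinfun_apply (- (k *\<^sub>R ys)) (v - ybar) \<le> 0"
      using c' by (simp add: scaleR_blinfun.rep_eq uminus_blinfun.rep_eq)
  qed
  have nys: "norm (k *\<^sub>R ys) \<le> 1"
  proof -
    have "norm ys \<le> \<tau>" by (rule norm_blinfun_bound) (use tau nY apY in auto)
    then show ?thesis using k tau by (simp add: k_def field_simps)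
  qed
  have bN: "k *\<^sub>R bs \<in> normal_cone A x" unfolding normal_cone_def
  proof (intro CollectI ballI)
    fix x' assume "x' \<in> A"
    then have "x' - x \<in> TA" unfolding TA_def by (rule tc_seg[OF cA xA])
    then have "b0 (x' - x) \<le> 0" by (rule fii)
    then show "blinfun_apply (k *\<^sub>R bs) (x' - x) \<le> 0" using apB k
      by (simp add: scaleR_blinfun.rep_eq mult_nonneg_nonpos)
  qed
  have nbs: "norm (k *\<^sub>R bs) \<le> 1"
  proof -
    have "norm bs \<le> \<tau>" by (rule norm_blinfun_bound) (use tau nB apB in auto)
    then show ?thesis using k tau by (simp add: k_def field_simps)
  qed
  have "k *\<^sub>R a \<in> coderiv_set F x ybar (cball 0 1)" unfolding coderiv_set_def using aC nys by auto
  moreover have "k *\<^sub>R bs \<in> normal_cone A x \<inter> cball 0 1" using bN nbs by auto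
  ultimately have "k *\<^sub>R a + k *\<^sub>R bs \<in> msum (coderiv_set F x ybar (cball 0 1)) (normal_cone A x \<inter> cball 0 1)"
    unfolding msum_def by blast
  moreover have "xs = \<tau> *\<^sub>R (k *\<^sub>R a + k *\<^sub>R bs)"
    using k unfolding a_def by (simp add: scaleR_add_right[symmetric])
  ultimately show ?thesis unfolding sscale_def by blast
qed

theorem proposition4p1:
  fixes F :: "'a::banach \<Rightarrow> 'b::banach set"
    and A :: "'a set" and ybar :: 'b and xbar :: 'a
  assumes "closed (gph F)" and "convex (gph F)"
    and "closed A" and "convex A"
    and "xbar \<in> {x. ybar \<in> F x} \<inter> A"
  shows "ereal_recip (eta_A F A xbar ybar) =
    Inf (ereal ` {\<tau>. \<tau> > 0 \<and> (\<exists>\<delta>>0. \<forall>x \<in> ({x. ybar \<in> F x} \<inter> A) \<inter> ball xbar \<delta>.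
       normal_cone ({x. ybar \<in> F x} \<inter> A) x \<inter> cball 0 1
       \<subseteq> sscale \<tau> (msum (coderiv_set F x ybar (cball 0 1)) (normal_cone A x \<inter> cball 0 1)))})"
    (is "_ = Inf (ereal ` ?T)")
proof -
  have cg: "convex (gph F)" and cA: "convex A" using assms by auto
  define E where "E = eta_set F A xbar ybar"
  have TE: "1 / \<tau> \<in> E" if "\<tau> \<in> ?T" for \<tau>
  proof -
    from that have tau: "\<tau> > 0" by simp
    from that obtain \<delta> where dl: "\<delta> > 0" and inc: "\<forall>x \<in> ({x. ybar \<in> F x} \<inter> A) \<inter> ball xbar \<delta>.
       normal_cone ({x. ybar \<in> F x} \<inter> A) x \<inter> cball 0 1
       \<subseteq> sscale \<tau> (msum (coderiv_set F x ybar (cball 0 1)) (normal_cone A x \<inter> cball 0 1))" by blast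
    have "\<forall>x \<in> ({x. ybar \<in> F x} \<inter> A) \<inter> ball xbar \<delta>.
      \<forall>\<eta>1 \<eta>2. \<eta>1 \<ge> 0 \<and> \<eta>2 \<ge> 0 \<and> \<eta>1 + \<eta>2 < 1 / \<tau> \<longrightarrow>
        graph_deriv_inv_set F ybar x (sscale \<eta>1 (cball 0 1))
          \<inter> msum (contingent_cone A x) (sscale \<eta>2 (cball 0 1))
        \<subseteq> msum (contingent_cone ({x. ybar \<in> F x} \<inter> A) x) (cball 0 1)"
    proof (intro ballI allI impI subsetI)
      fix x \<eta>1 \<eta>2 u
      assume x: "x \<in> ({x. ybar \<in> F x} \<inter> A) \<inter> ball xbar \<delta>"
        and e: "\<eta>1 \<ge> 0 \<and> \<eta>2 \<ge> 0 \<and> \<eta>1 + \<eta>2 < 1 / \<tau>"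
        and u: "u \<in> graph_deriv_inv_set F ybar x (sscale \<eta>1 (cball 0 1))
          \<inter> msum (contingent_cone A x) (sscale \<eta>2 (cball 0 1))"
      have e3: "\<tau> * (\<eta>1 + \<eta>2) < 1" using e tau by (simp add: field_simps)
      show "u \<in> msum (contingent_cone ({x. ybar \<in> F x} \<inter> A) x) (cball 0 1)"
        by (rule dir1_point[OF cg cA _ tau _ _ _ e3]) (use x inc e u in auto)
    qed
    then show ?thesis unfolding E_def eta_set_def using tau dl by auto
  qed
  have ET: "\<tau> \<in> ?T" if eE: "\<eta> \<in> E" and tau: "\<tau> > 0" and lt: "1 / \<tau> < \<eta>" for \<eta> \<tau>
  proof -
    from eE obtain \<delta> where dl: "\<delta> > 0" and prim: "\<forall>x \<in> ({x. ybar \<in> F x} \<inter> A) \<inter> ball xbar \<delta>.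
      \<forall>\<eta>1 \<eta>2. \<eta>1 \<ge> 0 \<and> \<eta>2 \<ge> 0 \<and> \<eta>1 + \<eta>2 < \<eta> \<longrightarrow>
        graph_deriv_inv_set F ybar x (sscale \<eta>1 (cball 0 1))
          \<inter> msum (contingent_cone A x) (sscale \<eta>2 (cball 0 1))
        \<subseteq> msum (contingent_cone ({x. ybar \<in> F x} \<inter> A) x) (cball 0 1)"
      unfolding E_def eta_set_def by blast
    have "\<forall>x \<in> ({x. ybar \<in> F x} \<inter> A) \<inter> ball xbar \<delta>.
       normal_cone ({x. ybar \<in> F x} \<inter> A) x \<inter> cball 0 1
       \<subseteq> sscale \<tau> (msum (coderiv_set F x ybar (cball 0 1)) (normal_cone A x \<inter> cball 0 1))"
    proof (intro ballI subsetI)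
      fix x xs assume x: "x \<in> ({x. ybar \<in> F x} \<inter> A) \<inter> ball xbar \<delta>"
        and xs: "xs \<in> normal_cone ({x. ybar \<in> F x} \<inter> A) x \<inter> cball 0 1"
      have xS: "x \<in> {x. ybar \<in> F x} \<inter> A" using x by blast
      show "xs \<in> sscale \<tau> (msum (coderiv_set F x ybar (cball 0 1)) (normal_cone A x \<inter> cball 0 1))"
        by (rule dir2_point[OF cg cA xS tau lt _ xs]) (use prim x in blast)
    qed
    then show ?thesis using tau dl by blast
  qed
  show ?thesis
  proof (cases "E = {}")
    case True
    then have T0: "?T = {}" using TE by blast
    have i: "Inf (ereal ` ?T) = \<infinity>" unfolding T0 by (simp add: top_ereal_def)
    have "eta_A F A xbar ybar = 0" using True unfolding eta_A_def E_def by simp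
    then have "ereal_recip (eta_A F A xbar ybar) = \<infinity>" unfolding ereal_recip_def by simp
    then show ?thesis using i by simp
  next
    case False
    define s where "s = Sup (ereal ` E)"
    have sdef: "eta_A F A xbar ybar = s" using False unfolding eta_A_def E_def s_def by simp
    have Epos: "\<eta> > 0" if "\<eta> \<in> E" for \<eta> using that unfolding E_def eta_set_def by simp
    obtain \<eta>0 where e0: "\<eta>0 \<in> E" using False by blast
    have "ereal \<eta>0 \<le> s" unfolding s_def using e0 by (intro SUP_upper)
    then have spos: "s > 0" using Epos[OF e0] by (metis ereal_less(2) order_less_le_trans)
    have "ereal_recip s \<le> Inf (ereal ` ?T)"
    proof (rule Inf_greatest)
      fix c assume "c \<in> ereal ` ?T"
      then obtain \<tau> where c: "c = ereal \<tau>" "\<tau> \<in> ?T" by blast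
      have tau: "\<tau> > 0" using c by simp
      have "ereal (1 / \<tau>) \<le> s" unfolding s_def using TE[OF c(2)] by (intro SUP_upper)
      show "ereal_recip s \<le> c"
      proof (cases s)
        case (real r)
        then have r: "1 / \<tau> \<le> r" "r > 0" using \<open>ereal (1 / \<tau>) \<le> s\<close> spos by auto
        then have "1 / r \<le> \<tau>" using tau by (simp add: field_simps)
        then show ?thesis using real r c unfolding ereal_recip_def by (simp add: one_ereal_def ereal_divide)
      next
        case PInf then show ?thesis unfolding ereal_recip_def using c tau by simp
      next
        case MInf then show ?thesis using spos by simp
      qed
    qed
    moreover have "Inf (ereal ` ?T) \<le> ereal_recip s"
    proof (rule dense_ge)
      fix c assume c: "ereal_recip s < c"
      show "Inf (ereal ` ?T) \<le> c"
      proof (cases c)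
        case PInf then show ?thesis by simp
      next
        case MInf then show ?thesis using c by simp
      next
        case (real c')
        have "ereal_recip s \<ge> 0" unfolding ereal_recip_def
          using spos by (cases s) auto
        then have "0 < ereal c'" using c real by (metis order_le_less_trans)
        then have c'p: "c' > 0" by simp
        have "ereal (1 / c') < s"
        proof (cases s)
          case (real r)
          then have rp: "r > 0" using spos by simp
          then have "1 / r < c'" using c \<open>c = ereal c'\<close> real unfolding ereal_recip_def by (simp add: one_ereal_def ereal_divide)
          then have "1 / c' < r" using rp c'p by (simp add: field_simps)
          then show ?thesis using real by simp
        next
          case PInf then show ?thesis by simp
        next
          case MInf then show ?thesis using spos by simp
        qed
        then obtain \<eta> where eta: "\<eta> \<in> E" "ereal (1 / c') < ereal \<eta>"
          unfolding s_def by (auto simp: less_SUP_iff)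
        have "c' \<in> ?T" by (rule ET[OF eta(1) c'p]) (use eta(2) in simp)
        then show ?thesis using real by (auto intro: Inf_lower)
      qed
    qed
    ultimately show ?thesis using sdef by simp
  qed
qed

end
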